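(* Let $H=(h_{ij})=(N^{-1/2}x_{ij})$ be a generalized symmetric Wigner matrix such that, for some constant $C_1>0$ and all $1\le i<j\le N$, $\mathbb{E}|h_{ii}|^2\le C_1/N$, $\mathbb{E}|h_{ij}|^2=1/N$, $\mathbb{E}|h_{ij}|^3\le C_1N^{-3/2}$, $\mathbb{E}|h_{ij}|^4\le C_1(\log N)N^{-2}$, and $H$ satisfies the bounded support condition with $q=N^{\phi}$ for some constant $\phi>0$. Then there exists another generalized symmetric Wigner matrix $\widetilde H=(N^{-1/2}\widetilde x_{ij})$ satisfying the bounded support condition with some $q\ge cN^{1/2}/\log N$ ($c>0$ a constant), such that $$\mathbb{E}x_{ij}^k=\mathbb{E}\widetilde x_{ij}^k\quad(i\ne j,\ k=1,2,3,4),\qquad \mathbb{E}x_{ii}^k=\mathbb{E}\widetilde x_{ii}^k\quad(k=1,2).$$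
   Context: A generalized symmetric Wigner matrix of size $N$ is a real symmetric matrix $H=(h_{ij})$ whose upper-triangular entries are independent real centered random variables (distributions may depend on $i,j,N$) with $|\mathbb{E}h_{ij}^2-N^{-1}|\le C_0N^{-1}\delta_{ij}$ for a constant $C_0$. The bounded support condition with $q$: for all $i,j$, $|h_{ij}|\le q^{-1}$ with probability at least $1-e^{-N^c}$ for some constant $c>0$. *)

theory Defs
  imports "HOL-Probability.Probability"
begin

text \<open>A (sequence of) generalized symmetric Wigner matrices is represented by the
laws of its upper-triangular entries: mu N i j is the distribution of h_ij
for the N x N matrix, 0 <= i <= j < N. The entries are independent, so the
joint law is the product of these marginals.\<close>

definition gen_wigner :: "(nat \<Rightarrow> nat \<Rightarrow> nat \<Rightarrow> real measure) \<Rightarrow> bool" where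
  "gen_wigner mu \<longleftrightarrow>
     (\<forall>N i j. i \<le> j \<and> j < N \<longrightarrow>
        prob_space (mu N i j) \<and> sets (mu N i j) = sets borel \<and>
        integrable (mu N i j) (\<lambda>x. x) \<and> integrable (mu N i j) (\<lambda>x. x ^ 2) \<and>
        (\<integral>x. x \<partial>(mu N i j)) = 0) \<and>
     (\<exists>C0. \<forall>N i j. i \<le> j \<and> j < N \<longrightarrow>
        \<bar>(\<integral>x. x ^ 2 \<partial>(mu N i j)) - 1 / real N\<bar> \<le> C0 / real N * (if i = j then 1 else 0))"

definition bounded_support :: "(nat \<Rightarrow> nat \<Rightarrow> nat \<Rightarrow> real measure) \<Rightarrow> (nat \<Rightarrow> real) \<Rightarrow> bool" where
  "bounded_support mu q \<longleftrightarrow>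
     (\<exists>c>0. \<forall>N i j. i \<le> j \<and> j < N \<longrightarrow>
        measure (mu N i j) {x. \<bar>x\<bar> \<le> inverse (q N)} \<ge> 1 - exp (- (real N powr c)))"

end

theory Submission
  imports Defs
begin

definition G :: "real \<Rightarrow> real \<Rightarrow> real \<Rightarrow> bool\<times>bool\<times>bool\<times>bool \<Rightarrow> real" where
"G r a b = (\<lambda>(c1,c2,c3,c4). if c1 then (if c3 then (if c4 then r else -r) else 0) else (if c2 then a else -b))"
definition P :: "real \<Rightarrow> real \<Rightarrow> real \<Rightarrow> (bool\<times>bool\<times>bool\<times>bool) pmf" where
"P t p al = pair_pmf (bernoulli_pmf t) (pair_pmf (bernoulli_pmf p) (pair_pmf (bernoulli_pmf al) (bernoulli_pmf (1/2))))"
lemma integral_G: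
  assumes "0 \<le> t" "t \<le> 1" "0 \<le> p" "p \<le> 1" "0 \<le> al" "al \<le> 1"
  shows "(\<integral>\<omega>. f (G r a b \<omega>) \<partial>P t p al) = t*(al/2*f r + al/2*f(-r) + (1-al)*f 0) + (1-t)*(p*f a + (1-p)*f(-b))"
proof -
  have "(\<integral>\<omega>. f (G r a b \<omega>) \<partial>P t p al) = (\<Sum>\<omega>\<in>UNIV. f (G r a b \<omega>) * pmf (P t p al) \<omega>)"
    by (rule integral_measure_pmf_real) auto
  also have "\<dots> = t*(al/2*f r + al/2*f(-r) + (1-al)*f 0) + (1-t)*(p*f a + (1-p)*f(-b))"
    unfolding UNIV_Times_UNIV[symmetric] UNIV_bool
    using assms apply (simp add: sum.cartesian_product[symmetric] P_def G_def pmf_pair algebra_simps)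
    by (simp add: field_simps)
  finally show ?thesis .
qed

lemma G_bound: "\<bar>G r a b \<omega>\<bar> \<le> max \<bar>r\<bar> (max \<bar>a\<bar> \<bar>b\<bar>)"
  by (auto simp: G_def split: prod.splits)

definition "ww s k = (1 + s^2) / (k::real)"
definition "uu s k = s / ww s k"
definition "aa s k = (uu s k + sqrt ((uu s k)^2 + 4)) / 2"
definition "bb s k = (sqrt ((uu s k)^2 + 4) - uu s k) / 2"
definition "pp s k = bb s k / (aa s k + bb s k)"
definition "RR s k = sqrt (1 + k / (1 + s^2))"
definition "al s k = 1 / (RR s k)^2"
definition "tt s k = 1 - ww s k"

lemma off_params:
  fixes s k :: real assumes hk: "1 + s^2 \<le> k"
  shows "0 \<le> tt s k" "tt s k \<le> 1" "0 \<le> pp s k" "pp s k \<le> 1" "0 \<le> al s k" "al s k \<le> 1"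
    and "max \<bar>RR s k\<bar> (max \<bar>aa s k\<bar> \<bar>bb s k\<bar>) \<le> 1 + k"
    and "\<And>n::nat. n \<in> {1,2,3,4} \<Longrightarrow> tt s k*(al s k/2*(RR s k)^n + al s k/2*(-RR s k)^n + (1-al s k)*0^n)
          + (1-tt s k)*(pp s k*(aa s k)^n + (1-pp s k)*(-bb s k)^n) = [0,1,s,k] ! (n - 1)"
proof -
  have s2: "0 \<le> s^2" by simp
  have kpos: "k > 0" "k \<ge> 1" using hk s2 by linarith+
  define w where "w = ww s k"
  define u where "u = uu s k"
  define S where "S = sqrt (u^2 + 4)"
  define a where "a = aa s k"
  define b where "b = bb s k"
  define R where "R = RR s k"
  have s2p: "0 < 1 + s^2" using s2 by linarith
  have w: "0 < w" "w \<le> 1" using hk kpos s2p unfolding w_def ww_def by (auto simp: field_simps)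
  have uw: "w * u = s" unfolding u_def uu_def w_def[symmetric] using w by simp
  have SS: "S^2 = u^2 + 4" unfolding S_def by simp
  have Su: "\<bar>u\<bar> < S" unfolding S_def by (rule real_less_rsqrt) (simp add: power2_eq_square)
  have Su2: "S \<le> \<bar>u\<bar> + 2" unfolding S_def
    by (rule real_le_lsqrt) (auto simp: power2_eq_square algebra_simps)
  have a: "a = (u + S)/2" and b: "b = (S - u)/2" unfolding a_def b_def aa_def bb_def S_def u_def by auto
  have apos: "a > 0" "b > 0" using Su a b by auto
  have ab: "a * b = 1" using SS unfolding a b by (simp add: field_simps power2_eq_square)
  have amb: "a - b = u" unfolding a b by (simp add: field_simps)
  have p: "pp s k = b / (a + b)" unfolding pp_def a_def b_def ..
  have p1: "1 - pp s k = a / (a+b)" unfolding p using apos by (simp add: field_simps)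
  have uabs: "\<bar>u\<bar> \<le> k"
  proof -
    have q: "0 \<le> (\<bar>s\<bar> - 1)^2" by simp
    have "\<bar>s\<bar> \<le> 1 + s^2" using q unfolding power2_eq_square
      by (smt (verit) abs_mult_self_eq left_diff_distrib mult.commute mult_cancel_left2 right_diff_distrib)
    hence "\<bar>s\<bar> * k \<le> (1 + s^2) * k" using kpos by (intro mult_right_mono) auto
    moreover have "u = s * k / (1 + s^2)" unfolding u_def uu_def ww_def using kpos
      by (simp add: field_simps add_pos_nonneg)
    moreover have "\<bar>s * k / (1 + s^2)\<bar> = \<bar>s\<bar> * k / (1 + s^2)" using kpos s2p by (simp add: abs_mult)
    ultimately show ?thesis using s2p by (simp add: divide_le_eq mult.commute)
  qed
  have R2: "R^2 = 1 + k / (1 + s^2)" unfolding R_def RR_def using kpos s2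
    by (simp add: add_nonneg_nonneg)
  have Rge: "R \<ge> 1" unfolding R_def RR_def using kpos s2 by (simp add: add_pos_nonneg)
  have Rle: "R \<le> 1 + k"
  proof -
    have "k / (1 + s^2) \<le> k" using kpos s2 by (simp add: divide_le_eq add_pos_nonneg mult_le_cancel_left1 add_increasing2)
    moreover have "(1+k)^2 = 1 + 2*k + k*k" by (simp add: power2_eq_square algebra_simps)
    moreover have "0 \<le> k * k" by simp
    ultimately have "R^2 \<le> (1+k)^2" using R2 kpos by linarith
    thus ?thesis using Rge kpos by (simp add: power2_le_iff_abs_le)
  qed
  show "0 \<le> tt s k" "tt s k \<le> 1" using w unfolding tt_def w_def by auto
  show "0 \<le> pp s k" "pp s k \<le> 1" using apos unfolding p by auto
  show "0 \<le> al s k" "al s k \<le> 1" using Rge unfolding al_def R_def[symmetric] by (auto simp: field_simps )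
  have aub1: "a \<le> 1 + k" using Su2 uabs abs_ge_self[of u] abs_ge_minus_self[of u] unfolding a by (simp add: field_simps)
  have aub2: "b \<le> 1 + k" using Su2 uabs abs_ge_self[of u] abs_ge_minus_self[of u] unfolding b by (simp add: field_simps)
  note aub = aub1 aub2
  show "max \<bar>RR s k\<bar> (max \<bar>aa s k\<bar> \<bar>bb s k\<bar>) \<le> 1 + k"
    unfolding a_def[symmetric] b_def[symmetric] R_def[symmetric] using aub apos Rle Rge by auto
  have A1: "pp s k * a + (1 - pp s k) * (-b) = 0" unfolding p1 unfolding p using apos by (simp add: field_simps)
  have A2: "pp s k * a^2 + (1 - pp s k) * (-b)^2 = 1"
  proof -
    have "b*a^2 + a*b^2 = (a*b)*(a+b)" by (simp add: algebra_simps power2_eq_square)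
    moreover have "pp s k * a^2 + (1 - pp s k) * (-b)^2 = (b*a^2 + a*b^2)/(a+b)"
      unfolding p1 unfolding p by (simp add: add_divide_distrib)
    ultimately show ?thesis using apos ab by simp
  qed
  have A3: "pp s k * a^3 + (1 - pp s k) * (-b)^3 = u"
  proof -
    have "b*a^3 - a*b^3 = (a*b)*(a-b)*(a+b)" by (simp add: algebra_simps power3_eq_cube)
    moreover have "pp s k * a^3 + (1 - pp s k) * (-b)^3 = (b*a^3 - a*b^3)/(a+b)"
      unfolding p1 unfolding p by (simp add: diff_divide_distrib)
    ultimately show ?thesis using apos ab amb by simp
  qed
  have A4: "pp s k * a^4 + (1 - pp s k) * (-b)^4 = u^2 + 1"
  proof -
    have "b*a^4 + a*b^4 = (a*b)*((a-b)^2 + a*b)*(a+b)" by (simp add: algebra_simps power2_eq_square power3_eq_cube eval_nat_numeral)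
    moreover have "pp s k * a^4 + (1 - pp s k) * (-b)^4 = (b*a^4 + a*b^4)/(a+b)"
      unfolding p1 unfolding p by (simp add: add_divide_distrib)
    ultimately show ?thesis using apos ab amb by simp
  qed
  have alR: "al s k * R^2 = 1" unfolding al_def R_def[symmetric] using Rge by simp
  have t1: "1 - tt s k = w" unfolding tt_def w_def by simp
  have k4: "tt s k * R^2 + w * (u^2 + 1) = k"
  proof -
    define c where "c = 1 + s^2"
    have c: "c > 0" using s2p c_def by simp
    have wc: "w = c / k" unfolding w_def ww_def c_def ..
    have uc: "u = s * k / c" unfolding u_def uu_def w_def[symmetric] wc using kpos c by simp
    have tc: "tt s k = 1 - c / k" unfolding tt_def ww_def c_def ..
    have Rc: "R^2 = 1 + k / c" unfolding R2 c_def ..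
    have "(1 - c/k)*(1+k/c) + c/k*((s*k/c)^2+1) = k*(1+s^2)/c"
      using c kpos by (simp add: field_simps power2_eq_square)
    thus ?thesis unfolding tc Rc wc uc using c unfolding c_def by simp
  qed
  fix n :: nat assume "n \<in> {1,2,3,4}"
  then consider "n=1" | "n=2" | "n=3" | "n=4" by auto
  then show "tt s k*(al s k/2*(RR s k)^n + al s k/2*(-RR s k)^n + (1-al s k)*0^n)
          + (1-tt s k)*(pp s k*(aa s k)^n + (1-pp s k)*(-bb s k)^n) = [0,1,s,k] ! (n - 1)"
  proof cases
    case 1 thus ?thesis using A1 by (simp add: a_def b_def R_def)
  next
    case 2 thus ?thesis using A2 alR by (simp add: a_def b_def R_def)
  next
    case 3 thus ?thesis using A3 t1 uw by (simp add: a_def b_def R_def)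
  next
    case 4
    have "al s k * R^4 = R^2" using alR by (simp add: eval_nat_numeral algebra_simps)
    moreover have "w * u^2 = u^2 - tt s k * u^2" unfolding t1[symmetric] by (simp add: algebra_simps)
    ultimately show ?thesis using 4 A4 t1 k4 by (simp add: a_def b_def R_def algebra_simps)
  qed
qed

lemma cube_bound: "\<bar>(y::real)^3\<bar> \<le> \<bar>y^2 + y^4\<bar>"
proof -
  define z where "z = \<bar>y\<bar>"
  have e: "z^2 + z^4 - z^3 = z^2 * ((z - 1/2)^2 + 3/4)" by (simp add: algebra_simps power2_eq_square eval_nat_numeral)
  have "0 \<le> z^2 * ((z - 1/2)^2 + 3/4)" by (intro mult_nonneg_nonneg) auto
  hence "z^3 \<le> z^2 + z^4" using e by linarith
  moreover have "\<bar>y^3\<bar> = z^3" "\<bar>y^2 + y^4\<bar> = z^2 + z^4" unfolding z_def by (simp_all add: power_abs)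
  ultimately show ?thesis by simp
qed

lemma hankel:
  fixes M :: "real measure" and c :: real
  assumes ps: "prob_space M" and i4: "integrable M (\<lambda>x. x^4)" and i2: "integrable M (\<lambda>x. x^2)"
    and i1: "integrable M (\<lambda>x. x)"
    and m1: "(\<integral>x. c * x \<partial>M) = 0" and m2: "(\<integral>x. (c * x)^2 \<partial>M) = 1"
  shows "1 + (\<integral>x. (c * x)^3 \<partial>M)^2 \<le> (\<integral>x. (c * x)^4 \<partial>M)"
proof -
  interpret prob_space M by fact
  have mx: "(\<lambda>x. x) \<in> borel_measurable M" using i1 by (rule borel_measurable_integrable)
  have i3: "integrable M (\<lambda>x. x^3)"
    by (rule Bochner_Integration.integrable_bound[OF Bochner_Integration.integrable_add[OF i2 i4]])
       (use mx cube_bound in auto)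
  define Y where "Y = (\<lambda>x::real. c * x)"
  have j1: "integrable M Y" unfolding Y_def using i1 by simp
  have j2: "integrable M (\<lambda>x. Y x ^ 2)" unfolding Y_def power_mult_distrib using i2 by simp
  have j3: "integrable M (\<lambda>x. Y x ^ 3)" unfolding Y_def power_mult_distrib using i3 by simp
  have j4: "integrable M (\<lambda>x. Y x ^ 4)" unfolding Y_def power_mult_distrib using i4 by simp
  define s where "s = (\<integral>x. Y x ^ 3 \<partial>M)"
  have eq: "\<And>x. (Y x ^ 2 - s * Y x - 1)^2 = Y x ^ 4 + ((- 2 * s) * Y x ^ 3 + ((s^2 - 2) * Y x ^ 2 + ((2 * s) * Y x + 1)))"
    by (simp add: algebra_simps power2_eq_square eval_nat_numeral)
  have "0 \<le> (\<integral>x. (Y x ^ 2 - s * Y x - 1)^2 \<partial>M)" by simp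
  also have "\<dots> = (\<integral>x. Y x ^ 4 + ((- 2 * s) * Y x ^ 3 + ((s^2 - 2) * Y x ^ 2 + ((2 * s) * Y x + 1))) \<partial>M)"
    unfolding eq ..
  also have "\<dots> = (\<integral>x. Y x ^ 4 \<partial>M) + ((- 2 * s) * (\<integral>x. Y x ^ 3 \<partial>M) + ((s^2 - 2) * (\<integral>x. Y x ^ 2 \<partial>M) + ((2 * s) * (\<integral>x. Y x \<partial>M) + 1)))"
    using j1 j2 j3 j4 by (simp add: Bochner_Integration.integral_add prob_space)
  finally show ?thesis using m1 m2 unfolding Y_def[symmetric] s_def[symmetric] by (simp add: power2_eq_square algebra_simps)
qed

lemma nu_facts:
  fixes t p al R a b N c :: real
  defines "M \<equiv> distr (measure_pmf (P t p al)) borel (\<lambda>\<omega>. G R a b \<omega> / sqrt N)"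
  shows "prob_space M" "sets M = sets borel"
    and "\<And>f::real\<Rightarrow>real. f \<in> borel_measurable borel \<Longrightarrow> integrable M f"
    and "\<And>f::real\<Rightarrow>real. f \<in> borel_measurable borel \<Longrightarrow> (\<integral>x. f x \<partial>M) = (\<integral>\<omega>. f (G R a b \<omega> / sqrt N) \<partial>P t p al)"
    and "(\<And>\<omega>. \<bar>G R a b \<omega> / sqrt N\<bar> \<le> c) \<Longrightarrow> measure M {x. \<bar>x\<bar> \<le> c} = 1"
proof -
  have meas: "(\<lambda>\<omega>. G R a b \<omega> / sqrt N) \<in> measurable (measure_pmf (P t p al)) borel" by simp
  show "prob_space M" unfolding M_def by (rule measure_pmf.prob_space_distr[OF meas])
  show "sets M = sets borel" unfolding M_def by simp
  have fin: "finite (set_pmf (P t p al))" by (rule finite_subset[OF subset_UNIV]) simp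
  show "integrable M f" if "f \<in> borel_measurable borel" for f :: "real \<Rightarrow> real"
    unfolding M_def using that meas fin by (simp add: integrable_distr_eq integrable_measure_pmf_finite)
  show "(\<integral>x. f x \<partial>M) = (\<integral>\<omega>. f (G R a b \<omega> / sqrt N) \<partial>P t p al)" if "f \<in> borel_measurable borel" for f :: "real \<Rightarrow> real"
    unfolding M_def using that meas by (simp add: integral_distr)
  assume bd: "\<And>\<omega>. \<bar>G R a b \<omega> / sqrt N\<bar> \<le> c"
  have cl: "{x::real. \<bar>x\<bar> \<le> c} \<in> sets borel"
    by (intro borel_closed closed_Collect_le) (auto intro: continuous_intros)
  have "measure M {x. \<bar>x\<bar> \<le> c} = measure (measure_pmf (P t p al)) ((\<lambda>\<omega>. G R a b \<omega> / sqrt N) -` {x. \<bar>x\<bar> \<le> c} \<inter> space (measure_pmf (P t p al)))"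
    unfolding M_def by (rule measure_distr[OF meas cl])
  also have "\<dots> = 1" using bd by simp
  finally show "measure M {x. \<bar>x\<bar> \<le> c} = 1" .
qed


theorem mainTheorem7:
  fixes mu :: "nat \<Rightarrow> nat \<Rightarrow> nat \<Rightarrow> real measure"
    and C1 \<phi> :: real
  assumes wig: "gen_wigner mu"
    and C1: "C1 > 0"
    and int4: "\<And>N i j. i < j \<Longrightarrow> j < N \<Longrightarrow> integrable (mu N i j) (\<lambda>x. x ^ 4)"
    and diag2: "\<And>N i. i < N \<Longrightarrow> (\<integral>x. \<bar>x\<bar> ^ 2 \<partial>(mu N i i)) \<le> C1 / real N"
    and off2: "\<And>N i j. i < j \<Longrightarrow> j < N \<Longrightarrow> (\<integral>x. \<bar>x\<bar> ^ 2 \<partial>(mu N i j)) = 1 / real N"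
    and off3: "\<And>N i j. i < j \<Longrightarrow> j < N \<Longrightarrow>
                 (\<integral>x. \<bar>x\<bar> ^ 3 \<partial>(mu N i j)) \<le> C1 * real N powr (-3/2)"
    and off4: "\<And>N i j. i < j \<Longrightarrow> j < N \<Longrightarrow>
                 (\<integral>x. \<bar>x\<bar> ^ 4 \<partial>(mu N i j)) \<le> C1 * ln (real N) * real N powr (-2)"
    and phi: "\<phi> > 0"
    and bs: "bounded_support mu (\<lambda>N. real N powr \<phi>)"
  shows "\<exists>nu :: nat \<Rightarrow> nat \<Rightarrow> nat \<Rightarrow> real measure. \<exists>q :: nat \<Rightarrow> real. \<exists>c :: real.
           gen_wigner nu \<and> c > 0 \<and>
           (\<forall>N. q N > 0 \<and> q N \<ge> c * sqrt (real N) / ln (real N)) \<and>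
           bounded_support nu q \<and>
           (\<forall>N i j. i < j \<and> j < N \<longrightarrow>
              integrable (nu N i j) (\<lambda>x. x ^ 4) \<and>
              (\<forall>k\<in>{1,2,3,4::nat}.
                 (\<integral>x. (sqrt (real N) * x) ^ k \<partial>(mu N i j))
                 = (\<integral>x. (sqrt (real N) * x) ^ k \<partial>(nu N i j)))) \<and>
           (\<forall>N i. i < N \<longrightarrow>
              (\<forall>k\<in>{1,2::nat}.
                 (\<integral>x. (sqrt (real N) * x) ^ k \<partial>(mu N i i))
                 = (\<integral>x. (sqrt (real N) * x) ^ k \<partial>(nu N i i))))"
  proof -
  have W: "\<And>N i j. i \<le> j \<Longrightarrow> j < N \<Longrightarrow> prob_space (mu N i j) \<and> sets (mu N i j) = sets borel \<and>
        integrable (mu N i j) (\<lambda>x. x) \<and> integrable (mu N i j) (\<lambda>x. x ^ 2) \<and>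
        (\<integral>x. x \<partial>(mu N i j)) = 0" using wig unfolding gen_wigner_def by blast
  define S where "S N i j n = (\<integral>x. (sqrt (real N) * x)^n \<partial>mu N i j)" for N i j :: nat and n :: nat
  define TT where "TT N i j = (if i < j then tt (S N i j 3) (S N i j 4) else 0)" for N i j
  define PP where "PP N i j = (if i < j then pp (S N i j 3) (S N i j 4) else 1/2)" for N i j
  define AL where "AL N i j = (if i < j then al (S N i j 3) (S N i j 4) else 0)" for N i j
  define R3 where "R3 N i j = (if i < j then RR (S N i j 3) (S N i j 4) else 0)" for N i j
  define A3 where "A3 N i j = (if i < j then aa (S N i j 3) (S N i j 4) else sqrt (S N i j 2))" for N i j
  define B3 where "B3 N i j = (if i < j then bb (S N i j 3) (S N i j 4) else sqrt (S N i j 2))" for N i j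
  define PN where "PN N i j = P (TT N i j) (PP N i j) (AL N i j)" for N i j
  define GN where "GN N i j = G (R3 N i j) (A3 N i j) (B3 N i j)" for N i j
  define nu where "nu N i j = distr (measure_pmf (PN N i j)) borel (\<lambda>\<omega>. GN N i j \<omega> / sqrt (real N))" for N i j
  define B where "B = 2 + C1 + 2 * sqrt C1"
  define q where "q N = (if N \<le> 1 then 1/B else sqrt (real N) / (B * ln (real N)))" for N :: nat
  have Bpos: "B > 0" unfolding B_def using C1 by (simp add: add_pos_nonneg)
  have nuF: "prob_space (nu N i j)" "sets (nu N i j) = sets borel"
    "\<And>f::real\<Rightarrow>real. f \<in> borel_measurable borel \<Longrightarrow> integrable (nu N i j) f"
    "\<And>f::real\<Rightarrow>real. f \<in> borel_measurable borel \<Longrightarrow> (\<integral>x. f x \<partial>nu N i j) = (\<integral>\<omega>. f (GN N i j \<omega> / sqrt (real N)) \<partial>PN N i j)"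
    "\<And>c. (\<And>\<omega>. \<bar>GN N i j \<omega> / sqrt (real N)\<bar> \<le> c) \<Longrightarrow> measure (nu N i j) {x. \<bar>x\<bar> \<le> c} = 1" for N i j
    unfolding nu_def PN_def GN_def by (rule nu_facts; assumption)+
  have S1: "S N i j 1 = 0" if "i \<le> j" "j < N" for N i j
    using W[OF that] unfolding S_def by simp
  have S2off: "S N i j 2 = 1" if "i < j" "j < N" for N i j
  proof -
    have "S N i j 2 = real N * (\<integral>x. x^2 \<partial>mu N i j)" unfolding S_def power_mult_distrib by simp
    also have "\<dots> = 1" using off2[OF that] that by simp
    finally show ?thesis .
  qed
  have S2diag: "0 \<le> S N i i 2 \<and> S N i i 2 \<le> C1" if "i < N" for N i
  proof -
    have "S N i i 2 = real N * (\<integral>x. x^2 \<partial>mu N i i)" unfolding S_def power_mult_distrib by simp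
    moreover have "(\<integral>x. x^2 \<partial>mu N i i) \<le> C1 / real N" using diag2[OF that] by simp
    moreover have "0 \<le> (\<integral>x. x^2 \<partial>mu N i i)" by simp
    ultimately show ?thesis using that by (simp add: field_simps)
  qed
  have S4: "S N i j 4 \<le> C1 * ln (real N)" if "i < j" "j < N" for N i j
  proof -
    have "S N i j 4 = (real N)^2 * (\<integral>x. x^4 \<partial>mu N i j)" unfolding S_def power_mult_distrib
      by (simp add: eval_nat_numeral)
    moreover have "(\<integral>x. x^4 \<partial>mu N i j) \<le> C1 * ln (real N) * (1 / (real N)^2)"
      using off4[OF that] by (simp add: powr_minus powr_realpow' inverse_eq_divide power_abs)
    ultimately show ?thesis using that by (simp add: field_simps)
  qed
  have hank: "1 + (S N i j 3)^2 \<le> S N i j 4" if "i < j" "j < N" for N i j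
    unfolding S_def
    by (rule hankel) (use W[of i j N] that int4 S1[of i j N] S2off[of i j N] in \<open>auto simp: S_def\<close>)
  have lnN: "2/3 \<le> ln (real N)" if "2 \<le> N" for N :: nat
  proof -
    have "ln 2 \<le> ln (real N)" using that by simp
    thus ?thesis using ln2_ge_two_thirds by linarith
  qed
  have valid: "0 \<le> TT N i j \<and> TT N i j \<le> 1 \<and> 0 \<le> PP N i j \<and> PP N i j \<le> 1 \<and> 0 \<le> AL N i j \<and> AL N i j \<le> 1"
    if "i \<le> j" "j < N" for N i j
  proof (cases "i < j")
    case True
    from off_params[OF hank[OF True that(2)]] show ?thesis unfolding TT_def PP_def AL_def using True by simp
  next
    case False thus ?thesis unfolding TT_def PP_def AL_def by simp
  qed
  have intG: "(\<integral>\<omega>. f (GN N i j \<omega>) \<partial>PN N i j) = TT N i j*(AL N i j/2*f (R3 N i j) + AL N i j/2*f(-R3 N i j) + (1-AL N i j)*f 0)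
     + (1-TT N i j)*(PP N i j*f (A3 N i j) + (1-PP N i j)*f(-B3 N i j))" if "i \<le> j" "j < N" for N i j and f :: "real \<Rightarrow> real"
    unfolding PN_def GN_def by (rule integral_G) (use valid[OF that] in auto)
  have Moff: "(\<integral>\<omega>. (GN N i j \<omega>)^n \<partial>PN N i j) = [0,1,S N i j 3, S N i j 4] ! (n-1)"
    if "i < j" "j < N" "n \<in> {1,2,3,4}" for N i j n
    using intG[of i j N "\<lambda>x. x^n"] off_params(8)[OF hank[OF that(1,2)] that(3)] that
    by (simp add: TT_def PP_def AL_def R3_def A3_def B3_def)
  have Mdiag: "(\<integral>\<omega>. (GN N i i \<omega>)^n \<partial>PN N i i) = [0, S N i i 2] ! (n-1)"
    if "i < N" "n \<in> {1,2}" for N i n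
    using intG[of i i N "\<lambda>x. x^n"] that S2diag[OF that(1)]
    by (auto simp: TT_def PP_def AL_def R3_def A3_def B3_def)
  have scaled: "(\<integral>x. (sqrt (real N) * x)^n \<partial>nu N i j) = (\<integral>\<omega>. (GN N i j \<omega>)^n \<partial>PN N i j)" if "0 < N" for N i j n
    using nuF(4)[of "\<lambda>x. (sqrt (real N) * x)^n"] that by simp
  have raw: "(\<integral>x. x^n \<partial>nu N i j) = (\<integral>\<omega>. (GN N i j \<omega>)^n \<partial>PN N i j) / sqrt (real N) ^ n" for N i j n
    using nuF(4)[of "\<lambda>x. x^n"] by (simp add: power_divide)
  have Gbd: "\<bar>GN N i j \<omega>\<bar> \<le> (if N \<le> 1 then B else B * ln (real N))" if "i \<le> j" "j < N" for N i j \<omega>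
  proof -
    have g: "\<bar>GN N i j \<omega>\<bar> \<le> max \<bar>R3 N i j\<bar> (max \<bar>A3 N i j\<bar> \<bar>B3 N i j\<bar>)" unfolding GN_def by (rule G_bound)
    have sC: "0 \<le> sqrt C1" using C1 by simp
    show ?thesis
    proof (cases "i < j")
      case True
      hence N2: "2 \<le> N" "\<not> N \<le> 1" using that by auto
      have "max \<bar>R3 N i j\<bar> (max \<bar>A3 N i j\<bar> \<bar>B3 N i j\<bar>) \<le> 1 + S N i j 4"
        using off_params(7)[OF hank[OF True that(2)]] True by (simp add: R3_def A3_def B3_def)
      moreover have "1 + S N i j 4 \<le> B * ln (real N)"
      proof -
        have "0 \<le> sqrt C1 * ln (real N)" using lnN[OF N2(1)] sC by (intro mult_nonneg_nonneg) auto
        moreover have "B * ln (real N) = 2 * ln (real N) + C1 * ln (real N) + 2 * (sqrt C1 * ln (real N))"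
          unfolding B_def by (simp add: algebra_simps)
        ultimately show ?thesis using S4[OF True that(2)] lnN[OF N2(1)] by linarith
      qed
      ultimately have "max \<bar>R3 N i j\<bar> (max \<bar>A3 N i j\<bar> \<bar>B3 N i j\<bar>) \<le> B * ln (real N)" by (rule order_trans)
      with g have "\<bar>GN N i j \<omega>\<bar> \<le> B * ln (real N)" by (rule order_trans)
      thus ?thesis using N2 by simp
    next
      case False hence ij: "i = j" using that by simp
      have v: "0 \<le> S N i i 2" "S N i i 2 \<le> C1" using S2diag that ij by auto
      have "max \<bar>R3 N i j\<bar> (max \<bar>A3 N i j\<bar> \<bar>B3 N i j\<bar>) \<le> sqrt C1" using False v ij by (simp add: R3_def A3_def B3_def)
      moreover have "sqrt C1 \<le> (if N \<le> 1 then B else B * ln (real N))"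
      proof (cases "N \<le> 1")
        case True thus ?thesis unfolding B_def using C1 by simp
      next
        case False
        hence N2: "2 \<le> N" by simp
        have "0 \<le> (2 + C1) * ln (real N)" using lnN[OF N2] C1 by simp
        moreover have "B * ln (real N) = (2 + C1) * ln (real N) + 2 * (sqrt C1 * ln (real N))"
          unfolding B_def by (simp add: algebra_simps)
        moreover have "sqrt C1 * (2/3) \<le> sqrt C1 * ln (real N)" using lnN[OF N2] sC by (intro mult_left_mono)
        ultimately have "sqrt C1 \<le> B * ln (real N)" using sC by linarith
        thus ?thesis using False by simp
      qed
      ultimately show ?thesis using g by linarith
    qed
  qed
  have Gbd2: "\<bar>GN N i j \<omega> / sqrt (real N)\<bar> \<le> inverse (q N)" if "i \<le> j" "j < N" for N i j \<omega>
  proof (cases "N \<le> 1")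
    case True
    hence "N = 1" using that by simp
    thus ?thesis using Gbd[OF that, of \<omega>] unfolding q_def by simp
  next
    case False
    hence N2: "2 \<le> N" by simp
    have "\<bar>GN N i j \<omega> / sqrt (real N)\<bar> = \<bar>GN N i j \<omega>\<bar> / sqrt (real N)" by (simp add: abs_divide)
    also have "\<dots> \<le> B * ln (real N) / sqrt (real N)"
      using Gbd[OF that, of \<omega>] False by (intro divide_right_mono) auto
    also have "\<dots> = inverse (q N)" unfolding q_def using False by simp
    finally show ?thesis .
  qed
  have M1: "(\<integral>\<omega>. (GN N i j \<omega>)^1 \<partial>PN N i j) = 0" if "i \<le> j" "j < N" for N i j
  proof (cases "i < j")
    case True thus ?thesis using Moff[OF True that(2), of 1] by simp
  next
    case False hence "i = j" using that by simp
    thus ?thesis using Mdiag[of i N 1] that by simp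
  qed
  have M2: "(\<integral>\<omega>. (GN N i j \<omega>)^2 \<partial>PN N i j) = (if i < j then 1 else S N i j 2)" if "i \<le> j" "j < N" for N i j
  proof (cases "i < j")
    case True thus ?thesis using Moff[OF True that(2), of 2] by simp
  next
    case False hence "i = j" using that by simp
    thus ?thesis using Mdiag[of i N 2] that by simp
  qed
  have gw: "gen_wigner nu"
    unfolding gen_wigner_def
  proof (rule conjI, goal_cases)
    case 1
    show ?case
    proof (intro allI impI)
      fix N i j :: nat assume h: "i \<le> j \<and> j < N"
      show "prob_space (nu N i j) \<and> sets (nu N i j) = sets borel \<and>
        integrable (nu N i j) (\<lambda>x. x) \<and> integrable (nu N i j) (\<lambda>x. x ^ 2) \<and>
        (\<integral>x. x \<partial>(nu N i j)) = 0"
      proof (intro conjI)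
        show "prob_space (nu N i j)" by (rule nuF(1))
        show "sets (nu N i j) = sets borel" by (rule nuF(2))
        show "integrable (nu N i j) (\<lambda>x. x)" by (rule nuF(3)) simp
        show "integrable (nu N i j) (\<lambda>x. x^2)" by (rule nuF(3)) simp
        have "(\<integral>x. x^1 \<partial>nu N i j) = 0" unfolding raw[of N i j 1] M1[of i j N, OF conjunct1[OF h] conjunct2[OF h]] by simp
        thus "(\<integral>x. x \<partial>nu N i j) = 0" by simp
      qed
    qed
  next
    case 2
    show ?case
    proof (intro exI[of _ "C1 + 1"] allI impI)
      fix N i j :: nat assume h: "i \<le> j \<and> j < N"
      hence Np: "0 < N" by auto
      have e: "(\<integral>x. x^2 \<partial>nu N i j) = (if i < j then 1 else S N i j 2) / real N"
        unfolding raw[of N i j 2] M2[of i j N, OF conjunct1[OF h] conjunct2[OF h]] using Np by simp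
      show "\<bar>(\<integral>x. x ^ 2 \<partial>(nu N i j)) - 1 / real N\<bar> \<le> (C1 + 1) / real N * (if i = j then 1 else 0)"
      proof (cases "i < j")
        case True thus ?thesis using e by simp
      next
        case False
        hence ij: "i = j" using h by simp
        have v: "0 \<le> S N i i 2" "S N i i 2 \<le> C1" using S2diag h ij by auto
        have "\<bar>S N i i 2 / real N - 1 / real N\<bar> = \<bar>S N i i 2 - 1\<bar> / real N" using Np
          by (simp add: diff_divide_distrib[symmetric] abs_divide)
        also have "\<dots> \<le> (C1 + 1) / real N" using v C1 Np by (intro divide_right_mono) auto
        finally show ?thesis using e ij by simp
      qed
    qed
  qed
  have bsn: "bounded_support nu q"
    unfolding bounded_support_def
  proof (intro exI[of _ 1] conjI allI impI)
    fix N i j :: nat assume h: "i \<le> j \<and> j < N"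
    have "measure (nu N i j) {x. \<bar>x\<bar> \<le> inverse (q N)} = 1"
      using h by (intro nuF(5) Gbd2) auto
    moreover have "0 < exp (- (real N powr 1))" by simp
    ultimately show "1 - exp (- (real N powr 1)) \<le> measure (nu N i j) {x. \<bar>x\<bar> \<le> inverse (q N)}" by linarith
  qed simp
  have qp: "q N > 0 \<and> q N \<ge> (1/B) * sqrt (real N) / ln (real N)" for N
  proof (cases "N \<le> 1")
    case True
    hence "ln (real N) = 0 \<or> sqrt (real N) = 0" by (cases N) auto
    thus ?thesis using True Bpos unfolding q_def by auto
  next
    case False
    hence "0 < ln (real N)" by simp
    thus ?thesis using False Bpos unfolding q_def by simp
  qed
  have offm: "integrable (nu N i j) (\<lambda>x. x ^ 4) \<and>
              (\<forall>k\<in>{1,2,3,4::nat}.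
                 (\<integral>x. (sqrt (real N) * x) ^ k \<partial>(mu N i j))
                 = (\<integral>x. (sqrt (real N) * x) ^ k \<partial>(nu N i j)))" if "i < j" "j < N" for N i j
  proof (intro conjI ballI)
    show "integrable (nu N i j) (\<lambda>x. x ^ 4)" by (rule nuF(3)) simp
    fix k :: nat assume k: "k \<in> {1,2,3,4}"
    have "(\<integral>x. (sqrt (real N) * x) ^ k \<partial>(nu N i j)) = [0,1,S N i j 3, S N i j 4] ! (k-1)"
      using scaled[of N i j k] Moff[OF that k] that by simp
    moreover have "(\<integral>x. (sqrt (real N) * x) ^ k \<partial>(mu N i j)) = S N i j k" unfolding S_def ..
    ultimately show "(\<integral>x. (sqrt (real N) * x) ^ k \<partial>(mu N i j)) = (\<integral>x. (sqrt (real N) * x) ^ k \<partial>(nu N i j))"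
      using k S1[of i j N] S2off[OF that] that by auto
  qed
  have diagm: "\<forall>k\<in>{1,2::nat}.
                 (\<integral>x. (sqrt (real N) * x) ^ k \<partial>(mu N i i))
                 = (\<integral>x. (sqrt (real N) * x) ^ k \<partial>(nu N i i))" if "i < N" for N i
  proof
    fix k :: nat assume k: "k \<in> {1,2}"
    have "(\<integral>x. (sqrt (real N) * x) ^ k \<partial>(nu N i i)) = [0, S N i i 2] ! (k-1)"
      using scaled[of N i i k] Mdiag[OF that k] that by simp
    moreover have "(\<integral>x. (sqrt (real N) * x) ^ k \<partial>(mu N i i)) = S N i i k" unfolding S_def ..
    ultimately show "(\<integral>x. (sqrt (real N) * x) ^ k \<partial>(mu N i i)) = (\<integral>x. (sqrt (real N) * x) ^ k \<partial>(nu N i i))"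
      using k S1[of i i N] that by auto
  qed
  show ?thesis
    apply (rule exI[of _ nu], rule exI[of _ q], rule exI[of _ "1/B"])
    using gw Bpos qp bsn offm diagm by auto
qed

end
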